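(* Let $\underline\phi\le\overline\phi$ and $\underline\chi\le\overline\chi$ be functions $[0,1]\to[0,1]$ satisfying (F1)–(F3). Then the pair $(C^{\mathrm{MM}}_{\underline\phi,\overline\chi},C^{\mathrm{MM}}_{\overline\phi,\underline\chi})$ is an imprecise copula which is coherent, i.e. with $\mathcal C=\{C: C \text{ a copula}, C^{\mathrm{MM}}_{\underline\phi,\overline\chi}\le C\le C^{\mathrm{MM}}_{\overline\phi,\underline\chi}\}$ one has $C^{\mathrm{MM}}_{\underline\phi,\overline\chi}=\inf_{C\in\mathcal C}C$ and $C^{\mathrm{MM}}_{\overline\phi,\underline\chi}=\sup_{C\in\mathcal C}C$ pointwise.
   Context: (F1) $\phi(0)=\chi(0)=0$, $\phi(1)=\chi(1)=1$; (F2) $\phi,\chi$ non-decreasing; (F3) $\phi(u)/u$ on $(0,1]$ and $\frac{1-\chi(w)}{w-\chi(w)}$ on $[0,1]$ (values in $[1,\infty]$) non-increasing. $C^{\mathrm{MM}}_{\phi,\chi}(u,w)=uw+\min\{u(1-w),(\phi(u)-u)(w-\chi(w))\}$. A copula is $C:[0,1]^2\to[0,1]$ with $C(u,0)=C(0,v)=0$, $C(u,1)=u$, $C(1,v)=v$, and $C(u_2,v_2)-C(u_1,v_2)-C(u_2,v_1)+C(u_1,v_1)\ge0$ for $u_1\le u_2$, $v_1\le v_2$. An imprecise copula is a pair $(\underline C,\overline C)$ of maps $[0,1]^2\to[0,1]$ both satisfying the boundary conditions of a copula and, for all $u_1\le u_2$, $v_1\le v_2$: $\underline C(u_2,v_2)+\overline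 C(u_1,v_1)-\underline C(u_2,v_1)-\underline C(u_1,v_2)\ge0$; $\overline C(u_2,v_2)+\underline C(u_1,v_1)-\underline C(u_2,v_1)-\underline C(u_1,v_2)\ge0$; $\overline C(u_2,v_2)+\overline C(u_1,v_1)-\overline C(u_2,v_1)-\underline C(u_1,v_2)\ge0$; $\overline C(u_2,v_2)+\overline C(u_1,v_1)-\underline C(u_2,v_1)-\overline C(u_1,v_2)\ge0$. *)

theory Defs
  imports "HOL-Analysis.Analysis"
begin

text \<open>The ratio (1 - chi w)/(w - chi w) as an extended real: value \<infinity> when the
  denominator vanishes (w < 1); at w = 1 the expression is 0/0 and we use the
  convention value 1 (the bottom of the admissible range [1,\<infinity>]).\<close>
definition chi_ratio :: "(real \<Rightarrow> real) \<Rightarrow> real \<Rightarrow> ereal" where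
  "chi_ratio ch w =
     (if w = 1 then 1
      else if w - ch w = 0 then \<infinity>
      else ereal ((1 - ch w) / (w - ch w)))"

definition F_conditions :: "(real \<Rightarrow> real) \<Rightarrow> (real \<Rightarrow> real) \<Rightarrow> bool" where
  "F_conditions \<phi> ch \<longleftrightarrow>
     (\<forall>x\<in>{0..1}. \<phi> x \<in> {0..1} \<and> ch x \<in> {0..1}) \<and>
     \<phi> 0 = 0 \<and> ch 0 = 0 \<and> \<phi> 1 = 1 \<and> ch 1 = 1 \<and>
     mono_on {0..1} \<phi> \<and> mono_on {0..1} ch \<and>
     (\<forall>u1 u2. 0 < u1 \<longrightarrow> u1 \<le> u2 \<longrightarrow> u2 \<le> 1 \<longrightarrow> \<phi> u2 / u2 \<le> \<phi> u1 / u1) \<and>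
     (\<forall>w\<in>{0..1}. 1 \<le> chi_ratio ch w) \<and>
     (\<forall>w1 w2. 0 \<le> w1 \<longrightarrow> w1 \<le> w2 \<longrightarrow> w2 \<le> 1 \<longrightarrow> chi_ratio ch w2 \<le> chi_ratio ch w1)"

definition C_MM :: "(real \<Rightarrow> real) \<Rightarrow> (real \<Rightarrow> real) \<Rightarrow> real \<Rightarrow> real \<Rightarrow> real" where
  "C_MM \<phi> ch u w = u * w + min (u * (1 - w)) ((\<phi> u - u) * (w - ch w))"

definition copula_boundary :: "(real \<Rightarrow> real \<Rightarrow> real) \<Rightarrow> bool" where
  "copula_boundary C \<longleftrightarrow>
     (\<forall>u\<in>{0..1}. \<forall>v\<in>{0..1}. C u v \<in> {0..1}) \<and>
     (\<forall>u\<in>{0..1}. C u 0 = 0 \<and> C 0 u = 0 \<and> C u 1 = u \<and> C 1 u = u)"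

definition is_copula :: "(real \<Rightarrow> real \<Rightarrow> real) \<Rightarrow> bool" where
  "is_copula C \<longleftrightarrow> copula_boundary C \<and>
     (\<forall>u1 u2 v1 v2. 0 \<le> u1 \<longrightarrow> u1 \<le> u2 \<longrightarrow> u2 \<le> 1 \<longrightarrow> 0 \<le> v1 \<longrightarrow> v1 \<le> v2 \<longrightarrow> v2 \<le> 1 \<longrightarrow>
        C u2 v2 - C u1 v2 - C u2 v1 + C u1 v1 \<ge> 0)"

definition imprecise_copula :: "(real \<Rightarrow> real \<Rightarrow> real) \<Rightarrow> (real \<Rightarrow> real \<Rightarrow> real) \<Rightarrow> bool" where
  "imprecise_copula Cl Cu \<longleftrightarrow> copula_boundary Cl \<and> copula_boundary Cu \<and>
     (\<forall>u1 u2 v1 v2. 0 \<le> u1 \<longrightarrow> u1 \<le> u2 \<longrightarrow> u2 \<le> 1 \<longrightarrow> 0 \<le> v1 \<longrightarrow> v1 \<le> v2 \<longrightarrow> v2 \<le> 1 \<longrightarrow>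
        Cl u2 v2 + Cu u1 v1 - Cl u2 v1 - Cl u1 v2 \<ge> 0 \<and>
        Cu u2 v2 + Cl u1 v1 - Cl u2 v1 - Cl u1 v2 \<ge> 0 \<and>
        Cu u2 v2 + Cu u1 v1 - Cu u2 v1 - Cl u1 v2 \<ge> 0 \<and>
        Cu u2 v2 + Cu u1 v1 - Cl u2 v1 - Cu u1 v2 \<ge> 0)"

definition copulas_between :: "(real \<Rightarrow> real \<Rightarrow> real) \<Rightarrow> (real \<Rightarrow> real \<Rightarrow> real) \<Rightarrow> (real \<Rightarrow> real \<Rightarrow> real) set" where
  "copulas_between Cl Cu = {C. is_copula C \<and>
     (\<forall>u\<in>{0..1}. \<forall>v\<in>{0..1}. Cl u v \<le> C u v \<and> C u v \<le> Cu u v)}"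

definition coherent :: "(real \<Rightarrow> real \<Rightarrow> real) \<Rightarrow> (real \<Rightarrow> real \<Rightarrow> real) \<Rightarrow> bool" where
  "coherent Cl Cu \<longleftrightarrow> copulas_between Cl Cu \<noteq> {} \<and>
     (\<forall>u\<in>{0..1}. \<forall>v\<in>{0..1}.
        Cl u v = (INF C\<in>copulas_between Cl Cu. C u v) \<and>
        Cu u v = (SUP C\<in>copulas_between Cl Cu. C u v))"

end

theory Submission
  imports Defs
begin

lemma K1:
  fixes u u' f f' B b :: real
  assumes "0 \<le> u" "u \<le> u'" "0 \<le> f" "f' * u \<le> f * u'" "0 \<le> b" "u = 0 \<Longrightarrow> f = 0"
    and "u*B - f*b \<ge> 0"
  shows "u*B - f*b \<le> max 0 (u'*B - f'*b)"
proof (cases "u = 0")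
  case True then show ?thesis using assms by simp
next
  case False
  then have up: "u > 0" using assms by simp
  have "u * (f' - f) * b \<le> (f*u' - f*u) * b"
    using assms by (intro mult_right_mono) (auto simp: algebra_simps)
  also have "\<dots> = (u' - u) * (f * b)" by (simp add: algebra_simps)
  also have "\<dots> \<le> (u' - u) * (u * B)" using assms by (intro mult_left_mono) auto
  finally have "u * ((u'*B - f'*b) - (u*B - f*b)) \<ge> 0" by (simp add: algebra_simps)
  then have "(u'*B - f'*b) - (u*B - f*b) \<ge> 0" using up by (simp add: zero_le_mult_iff)
  then show ?thesis by simp
qed

lemma K3:
  fixes x fx B1 B2 b1 b2 :: real
  assumes "0 \<le> x" "0 \<le> fx" "0 \<le> b1" "0 \<le> b2" "b2 \<le> B2" "B2 \<le> B1" "B2*b1 \<le> B1*b2"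
    and "x*B2 - fx*b2 \<ge> 0"
  shows "x*B2 - fx*b2 \<le> max 0 (x*B1 - fx*b1)"
proof (cases "b2 = 0")
  case True
  show ?thesis
  proof (cases "B2 = 0")
    case True with \<open>b2 = 0\<close> show ?thesis by simp
  next
    case False
    then have "B2 > 0" using assms True by simp
    then have "b1 = 0" using assms True proof -
      have "B2 * b1 \<le> 0" using assms True by simp
      moreover have "0 \<le> B2 * b1" using assms \<open>B2 > 0\<close> by simp
      ultimately have "B2 * b1 = 0" by simp
      then show ?thesis using \<open>B2 > 0\<close> by simp
    qed
    then show ?thesis using True assms by (simp add: mult_left_mono)
  qed
next
  case False
  then have bp: "b2 > 0" using assms by simp
  show ?thesis
  proof (cases "b1 \<le> b2")
    case True
    have "fx * (b1 - b2) \<le> 0" using True assms by (simp add: mult_nonneg_nonpos)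
    moreover have "0 \<le> x * (B1 - B2)" using assms by simp
    ultimately show ?thesis by (simp add: algebra_simps)
  next
    case False
    have "b2 * (fx * (b1 - b2)) = (fx*b2) * (b1 - b2)" by simp
    also have "\<dots> \<le> (x*B2) * (b1 - b2)" using assms False by (intro mult_right_mono) auto
    also have "\<dots> \<le> x * (b2 * (B1 - B2))"
    proof -
      have "B2*(b1-b2) \<le> b2*(B1-B2)" using assms by (simp add: algebra_simps)
      then show ?thesis using assms by (metis mult.assoc mult_left_mono)
    qed
    finally have "b2 * (fx * (b1 - b2)) \<le> b2 * (x * (B1 - B2))" by (simp add: ac_simps)
    then have "fx * (b1 - b2) \<le> x * (B1 - B2)" using bp by simp
    then show ?thesis by (simp add: algebra_simps)
  qed
qed

lemma K2:
  fixes u u' f f' B1 B2 b1 b2 :: real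
  assumes "0 \<le> u" "u \<le> u'" "0 \<le> f" "f \<le> f'" "f' * u \<le> f * u'" "0 < b2" "0 \<le> b1"
     "B2 \<le> B1" "B2*b1 \<le> B1*b2" "u'*B2 - f'*b2 \<ge> 0"
  shows "(u'*B2 - f'*b2) + (u*B1 - f*b1) \<le> (u'*B1 - f'*b1) + (u*B2 - f*b2)"
proof (cases "b1 \<le> b2")
  case True
  have "(u'-u)*(B2-B1) \<le> 0" using assms by (simp add: mult_nonneg_nonpos)
  moreover have "(f'-f)*(b2-b1) \<ge> 0" using assms True by simp
  ultimately show ?thesis by (simp add: algebra_simps)
next
  case False
  show ?thesis
  proof (cases "u' = 0")
    case True
    then have "u = 0" using assms by simp
    have "f' * b2 \<le> 0" using assms True by simp
    then have "f' \<le> 0" using assms by (simp add: mult_le_0_iff)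
    then have "f' = 0" "f = 0" using assms by auto
    then show ?thesis using True \<open>u = 0\<close> by simp
  next
    case u'n: False
    then have u'p: "u' > 0" using assms by simp
    have e1: "u' * (f' - f) \<le> f' * (u' - u)" using assms by (simp add: algebra_simps)
    have e2: "B2*(b1-b2) \<le> b2*(B1-B2)" using assms by (simp add: algebra_simps)
    have "u' * b2 * ((f' - f) * (b1 - b2)) = (u' * (f' - f)) * (b2 * (b1 - b2))" by (simp add: ac_simps)
    also have "\<dots> \<le> (f' * (u' - u)) * (b2 * (b1 - b2))"
      using e1 assms False by (intro mult_right_mono mult_nonneg_nonneg) auto
    also have "\<dots> = (f' * b2) * ((u' - u) * (b1 - b2))" by (simp add: ac_simps)
    also have "\<dots> \<le> (u' * B2) * ((u' - u) * (b1 - b2))"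
      using assms False by (intro mult_right_mono mult_nonneg_nonneg) auto
    also have "\<dots> = (u' * (u' - u)) * (B2 * (b1 - b2))" by (simp add: ac_simps)
    also have "\<dots> \<le> (u' * (u' - u)) * (b2 * (B1 - B2))"
      using e2 assms u'p by (intro mult_left_mono) auto
    also have "\<dots> = u' * b2 * ((u' - u) * (B1 - B2))" by (simp add: ac_simps)
    finally have "(f' - f) * (b1 - b2) \<le> (u' - u) * (B1 - B2)"
      using u'p assms by (simp add: mult_le_cancel_left_pos)
    then show ?thesis by (simp add: algebra_simps)
  qed
qed


lemma key:
  fixes u u' f f' B1 B2 b1 b2 :: real
  assumes "0 \<le> u" "u \<le> u'" "0 \<le> f" "f \<le> f'" "f' * u \<le> f * u'" "u = 0 \<Longrightarrow> f = 0"
    "0 \<le> b1" "0 \<le> b2" "b1 \<le> B1" "b2 \<le> B2" "B2 \<le> B1" "B2*b1 \<le> B1*b2"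
  shows "max 0 (u'*B2 - f'*b2) + max 0 (u*B1 - f*b1) \<le> max 0 (u'*B1 - f'*b1) + max 0 (u*B2 - f*b2)"
proof -
  have k1: "u*B1 - f*b1 \<ge> 0 \<Longrightarrow> u*B1 - f*b1 \<le> max 0 (u'*B1 - f'*b1)"
    using K1[of u u' f f' b1 B1] assms by auto
  show ?thesis
  proof (cases "b2 = 0")
    case True
    show ?thesis
    proof (cases "B2 = 0")
      case True
      have "max 0 (u*B1 - f*b1) \<le> max 0 (u'*B1 - f'*b1)"
        using k1 by (cases "u*B1 - f*b1 \<ge> 0") auto
      then show ?thesis using True \<open>b2 = 0\<close> by simp
    next
      case False
      then have "B2 > 0" using assms True by simp
      then have "b1 = 0" using assms True proof -
      have "B2 * b1 \<le> 0" using assms True by simp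
      moreover have "0 \<le> B2 * b1" using assms \<open>B2 > 0\<close> by simp
      ultimately have "B2 * b1 = 0" by simp
      then show ?thesis using \<open>B2 > 0\<close> by simp
    qed
      have "0 \<le> (u'-u)*(B1-B2)" using assms by simp
      moreover have "0 \<le> u * B1" "0 \<le> u' * B1" using assms \<open>B2 > 0\<close> by auto
      moreover have "0 \<le> u * B2" "0 \<le> u' * B2" using assms \<open>B2 > 0\<close> by auto
      ultimately show ?thesis using True \<open>b1 = 0\<close> by (simp add: algebra_simps)
    qed
  next
    case False
    then have b2p: "b2 > 0" using assms by simp
    show ?thesis
    proof (cases "u'*B2 - f'*b2 \<ge> 0")
      case True
      have k2: "(u'*B2 - f'*b2) + (u*B1 - f*b1) \<le> (u'*B1 - f'*b1) + (u*B2 - f*b2)"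
        using K2[of u u' f f' b2 b1 B2 B1] assms b2p True by auto
      have k3a: "u'*B2 - f'*b2 \<le> max 0 (u'*B1 - f'*b1)"
        using K3[of u' f' b1 b2 B2 B1] assms True by auto
      have k3b: "u*B2 - f*b2 \<ge> 0 \<Longrightarrow> u*B2 - f*b2 \<le> max 0 (u*B1 - f*b1)"
        using K3[of u f b1 b2 B2 B1] assms by auto
      show ?thesis using k2 k3a k3b True by linarith
    next
      case False
      then show ?thesis using k1 by linarith
    qed
  qed
qed

lemma C_MM_alt: "C_MM \<phi> ch u w = u - max 0 (u*(1 - ch w) - \<phi> u*(w - ch w))"
  unfolding C_MM_def by (simp add: min_def max_def algebra_simps)

lemma chi_le:
  assumes "F_conditions \<phi> ch" "0 \<le> w" "w \<le> 1"
  shows "ch w \<le> w"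
proof (cases "w = 1")
  case True then show ?thesis using assms unfolding F_conditions_def by simp
next
  case False
  have r: "1 \<le> chi_ratio ch w" using assms unfolding F_conditions_def by auto
  have c1: "ch w \<le> 1" using assms unfolding F_conditions_def by auto
  show ?thesis
  proof (rule ccontr)
    assume "\<not> ch w \<le> w"
    then have n: "w - ch w < 0" by simp
    then have "chi_ratio ch w = ereal ((1 - ch w) / (w - ch w))"
      using False unfolding chi_ratio_def by simp
    with r have "1 \<le> (1 - ch w) / (w - ch w)" by simp
    moreover have "(1 - ch w) / (w - ch w) \<le> 0" using n c1 by (simp add: divide_nonneg_neg)
    ultimately show False by simp
  qed
qed

lemma chi_P1:
  assumes F: "F_conditions \<phi> ch" and w: "0 \<le> w1" "w1 \<le> w2" "w2 \<le> 1"
  shows "(1 - ch w2) * (w1 - ch w1) \<le> (1 - ch w1) * (w2 - ch w2)"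
proof -
  have mono: "chi_ratio ch w2 \<le> chi_ratio ch w1" using F w unfolding F_conditions_def by blast
  have b1: "0 \<le> w1 - ch w1" using chi_le[OF F, of w1] w by simp
  have b2: "0 \<le> w2 - ch w2" using chi_le[OF F, of w2] w by simp
  have c1: "ch w1 \<le> 1" "ch w2 \<le> 1" using F w unfolding F_conditions_def by auto
  show ?thesis
  proof (cases "w2 = 1")
    case True
    then show ?thesis using F unfolding F_conditions_def by simp
  next
    case False
    then have w1n: "w1 \<noteq> 1" using w by auto
    show ?thesis
    proof (cases "w2 - ch w2 = 0")
      case True
      then have "chi_ratio ch w2 = \<infinity>" using False unfolding chi_ratio_def by simp
      then have "chi_ratio ch w1 = \<infinity>" using mono by simp
      then have "w1 - ch w1 = 0" using w1n unfolding chi_ratio_def by (auto split: if_splits)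
      then show ?thesis using True by simp
    next
      case b2n: False
      show ?thesis
      proof (cases "w1 - ch w1 = 0")
        case True
        then show ?thesis using c1 b2 by simp
      next
        case b1n: False
        have "ereal ((1 - ch w2) / (w2 - ch w2)) \<le> ereal ((1 - ch w1) / (w1 - ch w1))"
          using mono False w1n b1n b2n unfolding chi_ratio_def by simp
        then have "(1 - ch w2) / (w2 - ch w2) \<le> (1 - ch w1) / (w1 - ch w1)" by simp
        moreover have "w1 - ch w1 > 0" "w2 - ch w2 > 0" using b1 b2 b1n b2n by auto
        ultimately show ?thesis by (simp add: divide_simps mult.commute)
      qed
    qed
  qed
qed

lemma phi_ratio:
  assumes F: "F_conditions \<phi> ch" and "0 \<le> x" "x \<le> y" "y \<le> 1"
  shows "\<phi> y * x \<le> \<phi> x * y"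
proof (cases "x = 0")
  case True then show ?thesis using F unfolding F_conditions_def by simp
next
  case False
  then have "x > 0" using assms by simp
  then have "\<phi> y / y \<le> \<phi> x / x" using F assms unfolding F_conditions_def by blast
  then show ?thesis using \<open>x > 0\<close> assms by (simp add: divide_simps mult.commute)
qed

lemma phi_ge:
  assumes F: "F_conditions \<phi> ch" and "0 \<le> x" "x \<le> 1"
  shows "x \<le> \<phi> x"
  using phi_ratio[OF F, of x 1] assms F unfolding F_conditions_def by simp

lemma copula_MM:
  assumes F: "F_conditions \<phi> ch"
  shows "is_copula (C_MM \<phi> ch)"
proof -
  have rng: "\<phi> x \<in> {0..1} \<and> ch x \<in> {0..1}" if "x \<in> {0..1}" for x using F that unfolding F_conditions_def by blast
  have mp: "mono_on {0..1} \<phi>" "mono_on {0..1} ch" using F unfolding F_conditions_def by auto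
  have bnd: "copula_boundary (C_MM \<phi> ch)"
    unfolding copula_boundary_def
  proof (intro conjI ballI)
    fix u v :: real assume u: "u \<in> {0..1}" and v: "v \<in> {0..1}"
    have "0 \<le> \<phi> u - u" using phi_ge[OF F, of u] u by simp
    moreover have "0 \<le> v - ch v" using chi_le[OF F, of v] v by simp
    ultimately have "0 \<le> (\<phi> u - u) * (v - ch v)" by simp
    moreover have "0 \<le> u * (1 - v)" "0 \<le> u * v" using u v by auto
    ultimately have "0 \<le> C_MM \<phi> ch u v" unfolding C_MM_def by simp
    moreover have "C_MM \<phi> ch u v \<le> 1"
    proof -
      have "0 \<le> max 0 (u*(1 - ch v) - \<phi> u*(v - ch v))" by simp
      then show ?thesis using u unfolding C_MM_alt by auto
    qed
    ultimately show "C_MM \<phi> ch u v \<in> {0..1}" by simp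
  next
    fix u :: real assume u: "u \<in> {0..1}"
    show "C_MM \<phi> ch u 0 = 0" "C_MM \<phi> ch 0 u = 0" "C_MM \<phi> ch u 1 = u" "C_MM \<phi> ch 1 u = u"
      using F u unfolding C_MM_def F_conditions_def by (auto simp: min_def)
  qed
  show ?thesis unfolding is_copula_def
  proof (intro conjI bnd allI impI)
    fix u1 u2 v1 v2 :: real
    assume a: "0 \<le> u1" "u1 \<le> u2" "u2 \<le> 1" "0 \<le> v1" "v1 \<le> v2" "v2 \<le> 1"
    have f1: "0 \<le> \<phi> u1" "\<phi> u1 \<le> \<phi> u2" using rng[of u1] a mono_onD[OF mp(1), of u1 u2] by auto
    have c12: "ch v1 \<le> ch v2" using a mono_onD[OF mp(2), of v1 v2] by auto
    have "max 0 (u2*(1 - ch v2) - \<phi> u2*(v2 - ch v2)) + max 0 (u1*(1 - ch v1) - \<phi> u1*(v1 - ch v1))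
       \<le> max 0 (u2*(1 - ch v1) - \<phi> u2*(v1 - ch v1)) + max 0 (u1*(1 - ch v2) - \<phi> u1*(v2 - ch v2))"
    proof (rule key)
      show "\<phi> u2 * u1 \<le> \<phi> u1 * u2" using phi_ratio[OF F, of u1 u2] a by simp
      show "u1 = 0 \<Longrightarrow> \<phi> u1 = 0" using F unfolding F_conditions_def by simp
      show "0 \<le> v1 - ch v1" using chi_le[OF F, of v1] a by simp
      show "0 \<le> v2 - ch v2" using chi_le[OF F, of v2] a by simp
      show "(1 - ch v2) * (v1 - ch v1) \<le> (1 - ch v1) * (v2 - ch v2)" using chi_P1[OF F, of v1 v2] a by simp
    qed (use a f1 c12 in auto)
    then show "C_MM \<phi> ch u2 v2 - C_MM \<phi> ch u1 v2 - C_MM \<phi> ch u2 v1 + C_MM \<phi> ch u1 v1 \<ge> 0"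
      unfolding C_MM_alt by linarith
  qed
qed


lemma MM_le:
  assumes F1: "F_conditions \<phi>l chu" and F2: "F_conditions \<phi>u chl"
    and le1: "\<forall>x\<in>{0..1}. \<phi>l x \<le> \<phi>u x" and le2: "\<forall>x\<in>{0..1}. chl x \<le> chu x"
    and u: "u \<in> {0..1}" and v: "v \<in> {0..1}"
  shows "C_MM \<phi>l chu u v \<le> C_MM \<phi>u chl u v"
proof -
  have "0 \<le> \<phi>l u - u" using phi_ge[OF F1, of u] u by simp
  moreover have "0 \<le> v - chu v" using chi_le[OF F1, of v] v by simp
  moreover have "\<phi>l u - u \<le> \<phi>u u - u" using le1 u by simp
  moreover have "v - chu v \<le> v - chl v" using le2 v by simp
  ultimately have "(\<phi>l u - u) * (v - chu v) \<le> (\<phi>u u - u) * (v - chl v)"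
    by (intro mult_mono) auto
  then show ?thesis unfolding C_MM_def by (simp add: min_def)
qed

lemma imprecise_of_copulas:
  assumes "is_copula Cl" "is_copula Cu" "\<forall>u\<in>{0..1}. \<forall>v\<in>{0..1}. Cl u v \<le> Cu u v"
  shows "imprecise_copula Cl Cu"
  unfolding imprecise_copula_def
proof (intro conjI allI impI)
  show "copula_boundary Cl" "copula_boundary Cu" using assms unfolding is_copula_def by auto
next
  fix u1 u2 v1 v2 :: real
  assume a: "0 \<le> u1" "u1 \<le> u2" "u2 \<le> 1" "0 \<le> v1" "v1 \<le> v2" "v2 \<le> 1"
  have vl: "Cl u2 v2 - Cl u1 v2 - Cl u2 v1 + Cl u1 v1 \<ge> 0" using assms(1) a unfolding is_copula_def by blast
  have vu: "Cu u2 v2 - Cu u1 v2 - Cu u2 v1 + Cu u1 v1 \<ge> 0" using assms(2) a unfolding is_copula_def by blast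
  have l: "Cl x y \<le> Cu x y" if "x \<in> {0..1}" "y \<in> {0..1}" for x y using assms(3) that by blast
  have "Cl u1 v1 \<le> Cu u1 v1" "Cl u2 v2 \<le> Cu u2 v2" "Cl u1 v2 \<le> Cu u1 v2" "Cl u2 v1 \<le> Cu u2 v1"
    using l a by auto
  then show "Cl u2 v2 + Cu u1 v1 - Cl u2 v1 - Cl u1 v2 \<ge> 0"
    "Cu u2 v2 + Cl u1 v1 - Cl u2 v1 - Cl u1 v2 \<ge> 0"
    "Cu u2 v2 + Cu u1 v1 - Cu u2 v1 - Cl u1 v2 \<ge> 0"
    "Cu u2 v2 + Cu u1 v1 - Cl u2 v1 - Cu u1 v2 \<ge> 0" using vl vu by linarith+
qed

lemma coherent_of_copulas:
  assumes "is_copula Cl" "is_copula Cu" "\<forall>u\<in>{0..1}. \<forall>v\<in>{0..1}. Cl u v \<le> Cu u v"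
  shows "coherent Cl Cu"
proof -
  have inl: "Cl \<in> copulas_between Cl Cu" and inu: "Cu \<in> copulas_between Cl Cu"
    using assms unfolding copulas_between_def by auto
  show ?thesis unfolding coherent_def
  proof (intro conjI ballI)
    show "copulas_between Cl Cu \<noteq> {}" using inl by auto
  next
    fix u v :: real assume uv: "u \<in> {0..1}" "v \<in> {0..1}"
    show "Cl u v = (INF C\<in>copulas_between Cl Cu. C u v)"
      by (rule cInf_eq_minimum[symmetric]) (use inl uv in \<open>auto simp: copulas_between_def\<close>)
    show "Cu u v = (SUP C\<in>copulas_between Cl Cu. C u v)"
      by (rule cSup_eq_maximum[symmetric]) (use inu uv in \<open>auto simp: copulas_between_def\<close>)
  qed
qed

theorem corollary3:
  fixes \<phi>l \<phi>u chl chu :: "real \<Rightarrow> real"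
  assumes "F_conditions \<phi>l chl" and "F_conditions \<phi>l chu"
      and "F_conditions \<phi>u chl" and "F_conditions \<phi>u chu"
      and "\<forall>x\<in>{0..1}. \<phi>l x \<le> \<phi>u x"
      and "\<forall>x\<in>{0..1}. chl x \<le> chu x"
  shows "imprecise_copula (C_MM \<phi>l chu) (C_MM \<phi>u chl) \<and>
         coherent (C_MM \<phi>l chu) (C_MM \<phi>u chl)"
proof -
  have c1: "is_copula (C_MM \<phi>l chu)" by (rule copula_MM[OF assms(2)])
  have c2: "is_copula (C_MM \<phi>u chl)" by (rule copula_MM[OF assms(3)])
  have le: "\<forall>u\<in>{0..1}. \<forall>v\<in>{0..1}. C_MM \<phi>l chu u v \<le> C_MM \<phi>u chl u v"
    using MM_le[OF assms(2) assms(3) assms(5) assms(6)] by blast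
  show ?thesis using imprecise_of_copulas[OF c1 c2 le] coherent_of_copulas[OF c1 c2 le] by blast
qed

end
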